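(* For every $n$ and any $(\hat\imath,\hat\jmath)\in\mathcal E$ with associated matrices $B^n_1,B^n_2$, $$\inf_{u^s\in\Delta_J}\Big(1+\big\langle e,(B^n_1)^{-1}B^n_2u^s\big\rangle\Big)>0.$$
   Context: Network: $\mathcal I=\{1,\dots,I\}$, $\mathcal J=\{1,\dots,J\}$, edges $\mathcal E\subset\mathcal I\times\mathcal J$ with the bipartite graph $\mathcal G=(\mathcal I\cup\mathcal J,\mathcal E)$ a tree; $\mathbb R^{\mathcal G}$ denotes arrays in $\mathbb R^{I\times J}$ vanishing off $\mathcal E$. For each $n$, service rates $\mu^n_{ij}>0$ for $(i,j)\in\mathcal E$; $\mathcal J(i)=\{j:(i,j)\in\mathcal E\}$. Let $\mathcal D=\{(\alpha,\beta)\in\mathbb R^I\times\mathbb R^J:\sum_i\alpha_i=\sum_j\beta_j\}$ and $\Psi:\mathcal D\to\mathbb R^{\mathcal G}$ the unique linear map with $\sum_j\Psi_{ij}(\alpha,\beta)=\alpha_i$, $\sum_i\Psi_{ij}(\alpha,\beta)=\beta_j$. For $(\hat\imath,\hat\jmath)\in\mathcal E$, $B^n_1\in\mathbb R^{I\times I}$ and $B^n_2\in\mathbb R^{I\times J}$ are the unique matrices with column $\hat\jmath$ of $B^n_2$ zero and $\sum_{j\in\mathcal J(i)}\mu^n_{ij}\Psi_{ij}(\alpha,\beta)=(B^n_1\alpha+B^n_2\beta)_i$ for all $i$ and $(\alpha,\beta)\in\mathcal D$ ($B^n_1$ is invertible). $e$ is the all-ones vector and $\Delta_J=\{u\in\mathbb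 R^J_+:\langle e,u\rangle=1\}$. *)

theory Defs
  imports "HOL-Analysis.Analysis"
begin

definition bip_adj :: "('i \<times> 'j) set \<Rightarrow> ('i + 'j) \<Rightarrow> ('i + 'j) \<Rightarrow> bool" where
  "bip_adj E u v \<longleftrightarrow> (\<exists>i j. (i, j) \<in> E \<and>
      ((u = Inl i \<and> v = Inr j) \<or> (u = Inr j \<and> v = Inl i)))"

definition bip_connected :: "('i \<times> 'j) set \<Rightarrow> bool" where
  "bip_connected E \<longleftrightarrow> (\<forall>u v. (u, v) \<in> {(x, y). bip_adj E x y}\<^sup>*)"

definition bip_cycle :: "('i \<times> 'j) set \<Rightarrow> ('i + 'j) list \<Rightarrow> bool" where
  "bip_cycle E vs \<longleftrightarrow> length vs \<ge> 3 \<and> distinct vs \<and>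
     (\<forall>k. Suc k < length vs \<longrightarrow> bip_adj E (vs ! k) (vs ! Suc k)) \<and>
     bip_adj E (last vs) (hd vs)"

definition bip_tree :: "('i \<times> 'j) set \<Rightarrow> bool" where
  "bip_tree E \<longleftrightarrow> bip_connected E \<and> (\<nexists>vs. bip_cycle E vs)"

definition Dset :: "((real^'i) \<times> (real^'j)) set" where
  "Dset = {(a, b). sum (\<lambda>i. a $ i) UNIV = sum (\<lambda>j. b $ j) UNIV}"

definition is_Psi :: "('i \<times> 'j) set \<Rightarrow> (real^'i \<Rightarrow> real^'j \<Rightarrow> real^'j^'i) \<Rightarrow> bool" where
  "is_Psi E Psi \<longleftrightarrow> linear (\<lambda>(a, b). Psi a b) \<and>
     (\<forall>(a, b) \<in> Dset.
        (\<forall>i j. (i, j) \<notin> E \<longrightarrow> Psi a b $ i $ j = 0) \<and>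
        (\<forall>i. (\<Sum>j\<in>UNIV. Psi a b $ i $ j) = a $ i) \<and>
        (\<forall>j. (\<Sum>i\<in>UNIV. Psi a b $ i $ j) = b $ j))"

definition simplexJ :: "(real^'j) set" where
  "simplexJ = {u. (\<forall>j. 0 \<le> u $ j) \<and> (\<Sum>j\<in>UNIV. u $ j) = 1}"

end

theory Submission
  imports Defs
begin

lemma cycle_from_seq:
  fixes v :: "nat \<Rightarrow> 'a::finite"
  assumes adj: "\<And>n. R (v n) (v (Suc n))" and nb1: "\<And>n. v (Suc n) \<noteq> v n"
    and nb2: "\<And>n. v (Suc (Suc n)) \<noteq> v n"
  shows "\<exists>vs. length vs \<ge> 3 \<and> distinct vs \<and> (\<forall>k. Suc k < length vs \<longrightarrow> R (vs!k) (vs!Suc k)) \<and> R (last vs) (hd vs)"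
proof -
  have "\<not> inj v"
  proof
    assume "inj v"
    then have "infinite (range v)" using finite_imageD by blast
    then show False by simp
  qed
  then obtain a b where ab: "a \<noteq> b" "v a = v b" unfolding inj_def by blast
  define Q where "Q = {q. \<exists>p<q. v p = v q}"
  have "max a b \<in> Q" using ab unfolding Q_def
    by (cases "a < b") (auto simp: max_def intro!: exI[of _ "min a b"])
  define q where "q = (LEAST q. q \<in> Q)"
  have qQ: "q \<in> Q" unfolding q_def using \<open>max a b \<in> Q\<close> by (rule LeastI)
  have qmin: "\<And>q'. q' < q \<Longrightarrow> q' \<notin> Q" unfolding q_def using not_less_Least by blast
  obtain p where p: "p < q" "v p = v q" using qQ unfolding Q_def by blast
  define vs where "vs = map v [p..<q]"
  have len: "length vs = q - p" unfolding vs_def by simp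
  have "q \<noteq> Suc p" using nb1[of p] p by auto
  moreover have "q \<noteq> Suc (Suc p)" using nb2[of p] p by auto
  ultimately have l3: "length vs \<ge> 3" using len p by linarith
  have "inj_on v {p..<q}"
  proof (rule inj_onI)
    fix x y assume xy: "x \<in> {p..<q}" "y \<in> {p..<q}" "v x = v y"
    show "x = y"
    proof (rule ccontr)
      assume "x \<noteq> y"
      then have "max x y \<in> Q" using xy unfolding Q_def
        by (cases "x < y") (auto simp: max_def intro!: exI[of _ "min x y"])
      moreover have "max x y < q" using xy by auto
      ultimately show False using qmin by blast
    qed
  qed
  then have dist: "distinct vs" unfolding vs_def by (simp add: distinct_map)
  have ad: "\<forall>k. Suc k < length vs \<longrightarrow> R (vs!k) (vs!Suc k)"
    using adj by (auto simp: vs_def len)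
  have "last vs = v (q - 1)" "hd vs = v q" using p by (auto simp: vs_def last_map hd_map)
  moreover have "R (v (q - 1)) (v q)" using adj[of "q - 1"] p by (simp add: Suc_diff_1[of 0] )
  ultimately show ?thesis using l3 dist ad by metis
qed


lemma key:
  fixes E :: "('i::finite \<times> 'j::finite) set" and phi :: "'i \<Rightarrow> 'j \<Rightarrow> real"
  assumes tree: "bip_tree E"
    and mu_pos: "\<And>i j. (i, j) \<in> E \<Longrightarrow> mu i j > 0"
    and off: "\<And>i j. (i, j) \<notin> E \<Longrightarrow> phi i j = 0"
    and rows: "\<And>i. (\<Sum>j\<in>{j. (i, j) \<in> E}. mu i j * phi i j) = 0"
    and cols: "\<And>j. (\<Sum>i\<in>UNIV. phi i j) \<le> 0"
  shows "phi i j = 0"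
proof (rule ccontr)
  assume nz: "phi i j \<noteq> 0"
  have R: "\<exists>j'. j' \<noteq> j \<and> phi i j' > 0" if "phi i j < 0" for i j
  proof (rule ccontr)
    assume "\<not> ?thesis"
    then have le: "\<And>j'. j' \<noteq> j \<Longrightarrow> phi i j' \<le> 0" by force
    have jE: "(i, j) \<in> E" using off that by force
    let ?S = "{j. (i, j) \<in> E}"
    have "(\<Sum>j'\<in>?S. mu i j' * phi i j') = mu i j * phi i j + (\<Sum>j'\<in>?S - {j}. mu i j' * phi i j')"
      using jE by (subst sum.remove[of _ j]) auto
    also have "(\<Sum>j'\<in>?S - {j}. mu i j' * phi i j') \<le> 0"
      proof (rule sum_nonpos)
      fix x assume "x \<in> ?S - {j}"
      then have "mu i x > 0" "phi i x \<le> 0" using mu_pos le by auto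
      then show "mu i x * phi i x \<le> 0" by (simp add: mult_nonneg_nonpos)
    qed
    moreover have "mu i j * phi i j < 0" using mu_pos[OF jE] that by (simp add: mult_pos_neg)
    ultimately have "(\<Sum>j'\<in>?S. mu i j' * phi i j') < 0" by linarith
    then show False using rows by simp
  qed
  have C: "\<exists>i'. i' \<noteq> i \<and> phi i' j < 0" if "phi i j > 0" for i j
  proof (rule ccontr)
    assume "\<not> ?thesis"
    then have ge: "\<And>i'. i' \<noteq> i \<Longrightarrow> phi i' j \<ge> 0" by force
    have "(\<Sum>i'\<in>UNIV. phi i' j) = phi i j + (\<Sum>i'\<in>UNIV - {i}. phi i' j)"
      by (subst sum.remove[of _ i]) auto
    also have "(\<Sum>i'\<in>UNIV - {i}. phi i' j) \<ge> 0" by (rule sum_nonneg) (use ge in auto)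
    ultimately have "(\<Sum>i'\<in>UNIV. phi i' j) > 0" using that by linarith
    then show False using cols[of j] by simp
  qed
  have pE: "(i, j) \<in> E" if "phi i j \<noteq> 0" for i j using off that by blast
  have step: "\<exists>q. phi (fst q) (snd q) > 0 \<and> fst q \<noteq> fst p \<and> snd q \<noteq> snd p \<and> phi (fst q) (snd p) < 0"
    if pp: "phi (fst p) (snd p) > 0" for p
  proof -
    obtain i' where i': "i' \<noteq> fst p" "phi i' (snd p) < 0" using C pp by blast
    obtain j' where j': "j' \<noteq> snd p" "phi i' j' > 0" using R i'(2) by blast
    show ?thesis using i' j' by (intro exI[of _ "(i', j')"]) auto
  qed
  then obtain f where f: "\<And>p. phi (fst p) (snd p) > 0 \<Longrightarrow>
      phi (fst (f p)) (snd (f p)) > 0 \<and> fst (f p) \<noteq> fst p \<and> snd (f p) \<noteq> snd p \<and> phi (fst (f p)) (snd p) < 0"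
    by metis
  obtain p0 where p0: "phi (fst p0) (snd p0) > 0"
  proof (cases "phi i j > 0")
    case True then show ?thesis using that[of "(i, j)"] by simp
  next
    case False then have "phi i j < 0" using nz by linarith
    then obtain j' where "phi i j' > 0" using R by blast
    then show ?thesis using that[of "(i, j')"] by simp
  qed
  define g where "g n = (f ^^ n) p0" for n
  have gpos: "phi (fst (g n)) (snd (g n)) > 0" for n
    by (induction n) (auto simp: g_def p0 dest: f)
  have gS: "g (Suc n) = f (g n)" for n by (simp add: g_def)
  define v where "v n = (if even n then Inl (fst (g (n div 2))) else Inr (snd (g (n div 2))))" for n
  have adj: "bip_adj E (v n) (v (Suc n))" for n
  proof (cases "even n")
    case True
    then obtain k where k: "n = 2 * k" by blast
    have "(fst (g k), snd (g k)) \<in> E" using pE[of "fst (g k)" "snd (g k)"] gpos[of k] by force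
    then show ?thesis unfolding bip_adj_def v_def k by auto
  next
    case False
    then obtain k where k: "n = 2 * k + 1" using oddE by blast
    have "(fst (g (Suc k)), snd (g k)) \<in> E" using pE[of "fst (g (Suc k))" "snd (g k)"] f[OF gpos[of k]] gS[of k] by force
    moreover have "Suc n div 2 = Suc k" "n div 2 = k" using k by auto
    ultimately show ?thesis unfolding bip_adj_def v_def using k by auto
  qed
  have nb1: "v (Suc n) \<noteq> v n" for n unfolding v_def by auto
  have nb2: "v (Suc (Suc n)) \<noteq> v n" for n
  proof (cases "even n")
    case True
    then obtain k where k: "n = 2 * k" by blast
    have "Suc (Suc n) div 2 = Suc k" "n div 2 = k" using k by auto
    then show ?thesis unfolding v_def using True f[OF gpos[of k]] gS[of k] by auto
  next
    case False
    then obtain k where k: "n = 2 * k + 1" using oddE by blast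
    have "Suc (Suc n) div 2 = Suc k" "n div 2 = k" using k by auto
    then show ?thesis unfolding v_def using False f[OF gpos[of k]] gS[of k] by auto
  qed
  obtain vs where "bip_cycle E vs"
    using cycle_from_seq[of "bip_adj E" v, OF adj nb1 nb2] unfolding bip_cycle_def by blast
  then show False using tree unfolding bip_tree_def by blast
qed

lemma B2_axis:
  fixes B2 :: "real^'j::finite^'i::finite"
  assumes "\<And>i. B2 $ i $ jh = 0"
  shows "B2 *v axis jh c = 0"
proof -
  have "(\<Sum>j\<in>UNIV. B2 $ i $ j * (if j = jh then c else 0)) = 0" for i
  proof -
    have "(\<Sum>j\<in>UNIV. B2 $ i $ j * (if j = jh then c else 0)) = (\<Sum>j\<in>UNIV. if j = jh then B2 $ i $ j * c else 0)"
      by (rule sum.cong) auto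
    also have "\<dots> = 0" using assms by simp
    finally show ?thesis .
  qed
  then show ?thesis by (simp add: vec_eq_iff matrix_vector_mult_def axis_def)
qed

theorem corollary2:
  fixes E :: "('i::finite \<times> 'j::finite) set"
    and mu :: "'i \<Rightarrow> 'j \<Rightarrow> real"
    and Psi :: "real^'i \<Rightarrow> real^'j \<Rightarrow> real^'j^'i"
    and B1 :: "real^'i^'i" and B2 :: "real^'j^'i"
    and ih :: 'i and jh :: 'j
  assumes tree: "bip_tree E"
    and mu_pos: "\<And>i j. (i, j) \<in> E \<Longrightarrow> mu i j > 0"
    and Psi: "is_Psi E Psi"
    and edge: "(ih, jh) \<in> E"
    and B2_col: "\<And>i. B2 $ i $ jh = 0"
    and B_def: "\<And>a b i. (a, b) \<in> Dset \<Longrightarrow>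
        (\<Sum>j\<in>{j. (i, j) \<in> E}. mu i j * Psi a b $ i $ j) = (B1 *v a + B2 *v b) $ i"
  shows "Inf ((\<lambda>u. 1 + (1::real^'i) \<bullet> (matrix_inv B1 *v (B2 *v u))) ` simplexJ) > 0"
proof -
  have P_off: "\<And>a b i j. (a, b) \<in> Dset \<Longrightarrow> (i, j) \<notin> E \<Longrightarrow> Psi a b $ i $ j = 0"
   and P_row: "\<And>a b i. (a, b) \<in> Dset \<Longrightarrow> (\<Sum>j\<in>UNIV. Psi a b $ i $ j) = a $ i"
   and P_col: "\<And>a b j. (a, b) \<in> Dset \<Longrightarrow> (\<Sum>i\<in>UNIV. Psi a b $ i $ j) = b $ j"
    using Psi unfolding is_Psi_def by fast+
  have sum_axis: "(\<Sum>j\<in>UNIV. axis jh c $ j) = (c::real)" for c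
    by (simp add: axis_def)
  have "\<forall>x. B1 *v x = 0 \<longrightarrow> x = 0"
  proof (intro allI impI)
    fix a assume B1a: "B1 *v a = 0"
    define b where "b = axis jh (\<Sum>i\<in>UNIV. a $ i)"
    have D: "(a, b) \<in> Dset" unfolding Dset_def b_def using sum_axis by simp
    have rows: "(\<Sum>j\<in>{j. (i, j) \<in> E}. mu i j * Psi a b $ i $ j) = 0" for i
      using B_def[OF D, of i] B1a B2_axis[OF B2_col] by (simp add: b_def)
    have zero: "Psi a b $ i $ j = 0" for i j
    proof (cases "(\<Sum>i\<in>UNIV. a $ i) \<le> 0")
      case True
      show ?thesis
      proof (rule key[OF tree mu_pos, where phi="\<lambda>i j. Psi a b $ i $ j"])
        show "\<And>i j. (i, j) \<notin> E \<Longrightarrow> Psi a b $ i $ j = 0" using P_off[OF D] .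
        show "\<And>i. (\<Sum>j\<in>{j. (i, j) \<in> E}. mu i j * Psi a b $ i $ j) = 0" by (rule rows)
        show "\<And>j. (\<Sum>i\<in>UNIV. Psi a b $ i $ j) \<le> 0" using P_col[OF D] True
          by (simp add: b_def axis_def)
      qed
    next
      case False
      have "- Psi a b $ i $ j = 0"
      proof (rule key[OF tree mu_pos, where phi="\<lambda>i j. - Psi a b $ i $ j"])
        show "\<And>i j. (i, j) \<notin> E \<Longrightarrow> - Psi a b $ i $ j = 0" using P_off[OF D] by simp
        show "\<And>i. (\<Sum>j\<in>{j. (i, j) \<in> E}. mu i j * - Psi a b $ i $ j) = 0"
          using rows by (simp add: sum_negf)
        show "\<And>j. (\<Sum>i\<in>UNIV. - Psi a b $ i $ j) \<le> 0" using P_col[OF D] False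
          by (simp add: b_def axis_def sum_negf)
      qed
      then show ?thesis by simp
    qed
    show "a = 0" using P_row[OF D] zero by (simp add: vec_eq_iff)
  qed
  then have inv: "invertible B1"
    unfolding invertible_left_inverse matrix_left_invertible_ker by blast
  have Bx: "B1 *v (matrix_inv B1 *v y) = y" for y
  proof -
    have "B1 ** matrix_inv B1 = mat 1"
      using inv unfolding invertible_def matrix_inv_def by (rule someI2_ex) blast
    then show ?thesis by (simp add: matrix_vector_mul_assoc)
  qed
  define F where "F u = 1 + (1::real^'i) \<bullet> (matrix_inv B1 *v (B2 *v u))" for u
  have pos: "F u > 0" if uS: "u \<in> simplexJ" for u
  proof (rule ccontr)
    assume neg: "\<not> F u > 0"
    define x where "x = matrix_inv B1 *v (B2 *v u)"
    define s where "s = 1 + (\<Sum>i\<in>UNIV. x $ i)"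
    have Fs: "F u = s" unfolding F_def s_def x_def by (simp add: inner_vec_def)
    have su: "(\<Sum>j\<in>UNIV. u $ j) = 1" and un: "\<And>j. 0 \<le> u $ j" using uS by (auto simp: simplexJ_def)
    define b where "b = axis jh s - u"
    have sb: "(\<Sum>j\<in>UNIV. b $ j) = s - 1"
      unfolding b_def using sum_axis su by (simp add: sum_subtractf)
    have D: "(x, b) \<in> Dset" unfolding Dset_def using sb by (simp add: s_def)
    have B1x: "B1 *v x = B2 *v u" unfolding x_def by (rule Bx)
    have B2b: "B2 *v b = - (B2 *v u)"
      unfolding b_def by (simp add: matrix_vector_mult_diff_distrib B2_axis[OF B2_col])
    have rows: "(\<Sum>j\<in>{j. (i, j) \<in> E}. mu i j * Psi x b $ i $ j) = 0" for i
      using B_def[OF D, of i] B1x B2b by simp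
    have sle: "s \<le> 0" using neg Fs by simp
    have zero: "Psi x b $ i $ j = 0" for i j
    proof (rule key[OF tree mu_pos, where phi="\<lambda>i j. Psi x b $ i $ j"])
      show "\<And>i j. (i, j) \<notin> E \<Longrightarrow> Psi x b $ i $ j = 0" using P_off[OF D] .
      show "\<And>i. (\<Sum>j\<in>{j. (i, j) \<in> E}. mu i j * Psi x b $ i $ j) = 0" by (rule rows)
      show "\<And>j. (\<Sum>i\<in>UNIV. Psi x b $ i $ j) \<le> 0" using P_col[OF D] sle un
        by (simp add: b_def axis_def) (smt (verit))
    qed
    have "b $ j = 0" for j using P_col[OF D, of j] zero by simp
    then have "s - 1 = 0" using sb by simp
    then show False using sle by simp
  qed
  have closedS: "closed (simplexJ :: (real^'j) set)"
  proof -
    have "simplexJ = {u::real^'j. \<forall>j. 0 \<le> u $ j} \<inter> {u. (\<Sum>j\<in>UNIV. u $ j) = 1}"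
      by (auto simp: simplexJ_def)
    moreover have "closed {u::real^'j. \<forall>j. 0 \<le> u $ j}"
      by (intro closed_Collect_all closed_Collect_le continuous_intros)
    moreover have "closed {u::real^'j. (\<Sum>j\<in>UNIV. u $ j) = 1}"
      by (intro closed_Collect_eq continuous_intros)
    ultimately show ?thesis by (metis closed_Int)
  qed
  have boundedS: "bounded (simplexJ :: (real^'j) set)"
  proof (rule bounded_subset[OF bounded_cbox])
    show "simplexJ \<subseteq> cbox (0::real^'j) 1"
    proof
      fix u :: "real^'j" assume "u \<in> simplexJ"
      then have un: "\<And>j. 0 \<le> u $ j" and su: "(\<Sum>j\<in>UNIV. u $ j) = 1" by (auto simp: simplexJ_def)
      have "u $ j \<le> 1" for j using member_le_sum[of j UNIV "\<lambda>j. u $ j"] un su by simp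
      then show "u \<in> cbox 0 1" using un by (simp add: interval_cart)
    qed
  qed
  have ne: "axis jh 1 \<in> (simplexJ :: (real^'j) set)"
    unfolding simplexJ_def using sum_axis by (simp add: axis_def)
  have cont: "continuous_on simplexJ F" unfolding F_def matrix_vector_mul_assoc
    by (intro continuous_intros matrix_vector_mult_linear_continuous_on)
  obtain u0 where u0: "u0 \<in> simplexJ" "\<And>u. u \<in> simplexJ \<Longrightarrow> F u0 \<le> F u"
    using continuous_attains_inf[OF compact_eq_bounded_closed[THEN iffD2, OF conjI[OF boundedS closedS]] _ cont] ne
    by blast
  have "Inf (F ` simplexJ) = F u0" using u0 by (intro cInf_eq_minimum) auto
  then show ?thesis using pos[OF u0(1)] unfolding F_def[abs_def] by simp
qed

end
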